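(* Let $n\ge 2$, let $\Delta=\{1,2,\dots,n+1\}$ and let $P$ be a partition of $\{1,\dots,n+1\}$. Then there exists a strongly connected closed simplicial complex of type $\{3,4\}$ containing $\Delta$ as an $n$-face whose characteristic partition at $\Delta$ equals $P$, and any two such complexes are isomorphic by an isomorphism fixing each of $1,\dots,n+1$. Moreover, in any strongly connected closed simplicial complex of type $\{3,4\}$, the characteristic partitions at any two $n$-faces have the same multiset of part sizes.
   Context: An (abstract) simplicial complex of dimension $n$ is a family of finite nonempty sets closed under taking nonempty subsets and under nonempty intersections, whose maximal members (the $n$-faces or facets) all have cardinality $n+1$; a $k$-face is a member of cardinality $k+1$. It is closed if every $(n-1)$-face lies in exactly two $n$-faces. It is strongly connected if any two $n$-faces can be joined by a sequence of $n$-faces in which consecutive ones share an $(n-1)$-face. For an $(n-2)$-face $F$, every $n$-face $F'\supseteq F$ is $F\cup e$ for a unique $2$-set $e$; the link of $F$ is the graph formed by these edges $e$. A closed simplicial complex is of type $\{3,4\}$ if every $(n-2)$-face lies in exactly $3$ or $4$ $n$-faces (then its link is a single cycle of length $l(F)\in\{3,4\}$). Characteristic partition: in a closed complex of type $\{3,4\}$, let $\Delta=\{v_1,\dots,v_{n+1}\}$ be an $n$-face; for each $i$ let $\Delta_i$ be the unique $n$-face other than $\Delta$ containing $\Delta\setminus\{v_i\}$ and let $v_i'$ be the vertex of $\Delta_i$ not in $\Delta$. Declare $i\sim j$ iff $i=j$ or $v_i'=v_j'$ (equivalently $l(\Delta\setminus\{v_i,v_j\})=3$); this is an equivalence relation on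 $\{1,\dots,n+1\}$ and its classes form the characteristic partition at $\Delta$. Two complexes are isomorphic if there is a bijection between their vertex sets mapping faces exactly onto faces. *)

theory Defs
  imports Main "HOL-Library.Disjoint_Sets" "HOL-Library.Multiset"
begin

definition simplicial_complex :: "'a set set \<Rightarrow> nat \<Rightarrow> bool" where
  "simplicial_complex K n \<longleftrightarrow>
     (\<forall>F\<in>K. finite F \<and> F \<noteq> {}) \<and>
     (\<forall>F\<in>K. \<forall>G. G \<subseteq> F \<and> G \<noteq> {} \<longrightarrow> G \<in> K) \<and>
     (\<forall>F\<in>K. \<forall>G\<in>K. F \<inter> G \<noteq> {} \<longrightarrow> F \<inter> G \<in> K) \<and>
     (\<forall>F\<in>K. (\<not> (\<exists>G\<in>K. F \<subset> G)) \<longrightarrow> card F = n + 1)"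

definition facets_containing :: "'a set set \<Rightarrow> nat \<Rightarrow> 'a set \<Rightarrow> 'a set set" where
  "facets_containing K n F = {G \<in> K. card G = n + 1 \<and> F \<subseteq> G}"

definition closed_complex :: "'a set set \<Rightarrow> nat \<Rightarrow> bool" where
  "closed_complex K n \<longleftrightarrow> simplicial_complex K n \<and>
     (\<forall>F\<in>K. card F = n \<longrightarrow> card (facets_containing K n F) = 2)"

definition facet_adj :: "'a set set \<Rightarrow> nat \<Rightarrow> 'a set \<Rightarrow> 'a set \<Rightarrow> bool" where
  "facet_adj K n F G \<longleftrightarrow> F \<in> K \<and> G \<in> K \<and> card F = n + 1 \<and> card G = n + 1 \<and>
     card (F \<inter> G) = n"

definition strongly_connected :: "'a set set \<Rightarrow> nat \<Rightarrow> bool" where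
  "strongly_connected K n \<longleftrightarrow>
     (\<forall>F\<in>K. \<forall>G\<in>K. card F = n + 1 \<and> card G = n + 1 \<longrightarrow> (facet_adj K n)\<^sup>*\<^sup>* F G)"

definition type34 :: "'a set set \<Rightarrow> nat \<Rightarrow> bool" where
  "type34 K n \<longleftrightarrow> closed_complex K n \<and>
     (\<forall>F\<in>K. card F = n - 1 \<longrightarrow> card (facets_containing K n F) \<in> {3, 4})"

definition opp_vertex :: "'a set set \<Rightarrow> 'a set \<Rightarrow> 'a \<Rightarrow> 'a" where
  "opp_vertex K D v = (THE w. w \<notin> D \<and> insert w (D - {v}) \<in> K)"

definition char_rel :: "'a set set \<Rightarrow> 'a set \<Rightarrow> ('a \<times> 'a) set" where
  "char_rel K D = {(v, w). v \<in> D \<and> w \<in> D \<and> (v = w \<or> opp_vertex K D v = opp_vertex K D w)}"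

definition char_partition :: "'a set set \<Rightarrow> 'a set \<Rightarrow> 'a set set" where
  "char_partition K D = D // char_rel K D"

definition complex_iso :: "('a \<Rightarrow> 'b) \<Rightarrow> 'a set set \<Rightarrow> 'b set set \<Rightarrow> bool" where
  "complex_iso f K1 K2 \<longleftrightarrow> bij_betw f (\<Union>K1) (\<Union>K2) \<and>
     (\<forall>F. F \<subseteq> \<Union>K1 \<longrightarrow> (F \<in> K1 \<longleftrightarrow> f ` F \<in> K2))"

end

theory Submission
  imports Defs "HOL-Library.FuncSet"
begin

definition Fac :: "'a set set \<Rightarrow> 'a set set" where
  "Fac Q = {S. S \<subseteq> \<Union>Q \<and> (\<forall>C\<in>Q. card (C - S) = 1)}"

definition Kmod :: "'a set set \<Rightarrow> 'a set set" where
  "Kmod Q = {F. F \<noteq> {} \<and> (\<exists>S\<in>Fac Q. F \<subseteq> S)}"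

definition miss :: "'a set \<Rightarrow> 'a set \<Rightarrow> 'a" where
  "miss S C = the_elem (C - S)"

lemma prod0: "finite A \<Longrightarrow> sum h A = (0::nat) \<Longrightarrow> prod (\<lambda>x. h x + 1) A = 1"
  by (simp add: prod.neutral)

lemma prod1: "finite A \<Longrightarrow> sum h A = (1::nat) \<Longrightarrow> prod (\<lambda>x. h x + 1) A = 2"
proof (induction A rule: finite_induct)
  case empty then show ?case by simp
next
  case (insert a A)
  then have "h a + sum h A = 1" by simp
  then consider "h a = 0" "sum h A = 1" | "h a = 1" "sum h A = 0" by linarith
  then show ?case
  proof cases
    case 1 then show ?thesis using insert by simp
  next
    case 2 then show ?thesis using insert prod0[of A h] by simp
  qed
qed

lemma prod2: "finite A \<Longrightarrow> sum h A = (2::nat) \<Longrightarrow> prod (\<lambda>x. h x + 1) A \<in> {3,4}"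
proof (induction A rule: finite_induct)
  case empty then show ?case by simp
next
  case (insert a A)
  then have "h a + sum h A = 2" by simp
  then consider "h a = 0" "sum h A = 2" | "h a = 1" "sum h A = 1" | "h a = 2" "sum h A = 0" by linarith
  then show ?case
  proof cases
    case 1 then show ?thesis using insert by simp
  next
    case 2 then show ?thesis using insert prod1[of A h] by simp
  next
    case 3 then show ?thesis using insert prod0[of A h] by simp
  qed
qed

lemma sum_minus_one:
  assumes "finite A" "\<forall>x\<in>A. (1::nat) \<le> g x"
  shows "sum g A = sum (\<lambda>x. g x - 1) A + card A"
proof -
  have "sum g A = sum (\<lambda>x. (g x - 1) + 1) A" using assms(2) by (intro sum.cong) auto
  also have "\<dots> = sum (\<lambda>x. g x - 1) A + card A" unfolding sum.distrib by simp
  finally show ?thesis .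
qed

lemma card_insert_ex:
  assumes "finite G" "A \<subseteq> G" "card G = Suc (card A)"
  shows "\<exists>y. y \<notin> A \<and> G = insert y A"
proof -
  have fA: "finite A" using assms finite_subset by blast
  have "card (G - A) = 1" using assms fA by (simp add: card_Diff_subset)
  then obtain y where "G - A = {y}" by (rule card_1_singletonE)
  then show ?thesis using assms(2) by blast
qed

locale blocks =
  fixes Q :: "'a set set" and n :: nat
  assumes finQ: "finite Q" and finC: "\<And>C. C \<in> Q \<Longrightarrow> finite C"
    and two: "\<And>C. C \<in> Q \<Longrightarrow> 2 \<le> card C"
    and disj: "\<And>C C'. C \<in> Q \<Longrightarrow> C' \<in> Q \<Longrightarrow> C \<noteq> C' \<Longrightarrow> C \<inter> C' = {}"
    and cardU: "card (\<Union>Q) = card Q + Suc n"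
begin

lemma finU: "finite (\<Union>Q)" using finQ finC by blast

lemma blk_unique: "C \<in> Q \<Longrightarrow> C' \<in> Q \<Longrightarrow> x \<in> C \<Longrightarrow> x \<in> C' \<Longrightarrow> C = C'"
  using disj by blast

lemma miss:
  assumes "S \<in> Fac Q" "C \<in> Q"
  shows "C - S = {miss S C}" "miss S C \<in> C" "miss S C \<notin> S"
proof -
  have "card (C - S) = 1" using assms by (auto simp: Fac_def)
  then obtain y where y: "C - S = {y}" by (rule card_1_singletonE)
  then show "C - S = {miss S C}" by (simp add: miss_def)
  then show "miss S C \<in> C" "miss S C \<notin> S" by auto
qed

lemma miss_eq: "S \<in> Fac Q \<Longrightarrow> C \<in> Q \<Longrightarrow> y \<in> C \<Longrightarrow> y \<notin> S \<Longrightarrow> y = miss S C"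
  using miss(1) by blast

lemma Fac_sub: "S \<in> Fac Q \<Longrightarrow> S \<subseteq> \<Union>Q" by (simp add: Fac_def)

lemma compl_Fac: "S \<in> Fac Q \<Longrightarrow> \<Union>Q - S = miss S ` Q"
proof
  assume S: "S \<in> Fac Q"
  show "\<Union>Q - S \<subseteq> miss S ` Q"
  proof
    fix y assume "y \<in> \<Union>Q - S"
    then obtain C where "C \<in> Q" "y \<in> C" "y \<notin> S" by blast
    then show "y \<in> miss S ` Q" using miss_eq[OF S] by blast
  qed
  show "miss S ` Q \<subseteq> \<Union>Q - S" using miss[OF S] by blast
qed

lemma miss_inj: "S \<in> Fac Q \<Longrightarrow> inj_on (miss S) Q"
  by (rule inj_onI) (metis miss(2) blk_unique)

lemma Fac_card: assumes S: "S \<in> Fac Q" shows "card S = Suc n"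
proof -
  have "card (\<Union>Q - S) = card Q" using compl_Fac[OF S] miss_inj[OF S] card_image by metis
  moreover have "card (\<Union>Q - S) = card (\<Union>Q) - card S"
    using Fac_sub[OF S] finU by (meson card_Diff_subset finite_subset)
  moreover have "card S \<le> card (\<Union>Q)" using Fac_sub[OF S] finU card_mono by blast
  ultimately show ?thesis using cardU by linarith
qed

lemma choice_Fac:
  assumes m: "\<And>C. C \<in> Q \<Longrightarrow> m C \<in> C"
  shows "\<Union>Q - m ` Q \<in> Fac Q" "\<And>C. C \<in> Q \<Longrightarrow> miss (\<Union>Q - m ` Q) C = m C"
proof -
  have eq: "C - (\<Union>Q - m ` Q) = {m C}" if "C \<in> Q" for C
  proof -
    have "C \<inter> m ` Q = {m C}" using m that blk_unique by blast
    then show ?thesis using that by blast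
  qed
  then show "\<Union>Q - m ` Q \<in> Fac Q" by (auto simp: Fac_def)
  fix C assume "C \<in> Q" then show "miss (\<Union>Q - m ` Q) C = m C" using eq by (simp add: miss_def)
qed

lemma Fac_repr: "S \<in> Fac Q \<Longrightarrow> S = \<Union>Q - miss S ` Q"
  using compl_Fac Fac_sub by blast

lemma flip:
  assumes S: "S \<in> Fac Q" and C: "C \<in> Q" and x: "x \<in> C" "x \<in> S"
  shows "insert (miss S C) (S - {x}) \<in> Fac Q"
    "miss (insert (miss S C) (S - {x})) C = x"
    "\<And>C'. C' \<in> Q \<Longrightarrow> C' \<noteq> C \<Longrightarrow> miss (insert (miss S C) (S - {x})) C' = miss S C'"
proof -
  let ?T = "insert (miss S C) (S - {x})"
  have e1: "C - ?T = {x}" using miss[OF S C] x by auto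
  have e2: "C' - ?T = C' - S" if "C' \<in> Q" "C' \<noteq> C" for C'
    using disj[OF that(1) C that(2)] miss[OF S C] x by auto
  have "?T \<subseteq> \<Union>Q" using Fac_sub[OF S] miss[OF S C] C by blast
  moreover have "card (C' - ?T) = 1" if "C' \<in> Q" for C'
    using e1 e2 that S by (cases "C' = C") (auto simp: Fac_def)
  ultimately show "?T \<in> Fac Q" by (simp add: Fac_def)
  show "miss ?T C = x" using e1 by (simp add: miss_def)
  fix C' assume "C' \<in> Q" "C' \<noteq> C" then show "miss ?T C' = miss S C'"
    using e2 by (simp add: miss_def)
qed

end

lemma fc_finite: "card (facets_containing K n F) = Suc m \<Longrightarrow> finite (facets_containing K n F)"
  using card.infinite by fastforce

lemma sc_sub: "simplicial_complex K n \<Longrightarrow> F \<in> K \<Longrightarrow> G \<subseteq> F \<Longrightarrow> G \<noteq> {} \<Longrightarrow> G \<in> K"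
  unfolding simplicial_complex_def by blast

lemma sc_fin: assumes "simplicial_complex K n" "F \<in> K" shows "finite F \<and> F \<noteq> {}"
proof -
  have "\<forall>F\<in>K. finite F \<and> F \<noteq> {}" using assms(1) unfolding simplicial_complex_def by (rule conjunct1)
  then show ?thesis using assms(2) by (rule bspec)
qed

lemma sc_max: assumes "simplicial_complex K n" "F \<in> K" "\<not> (\<exists>G\<in>K. F \<subset> G)" shows "card F = n + 1"
proof -
  have "\<forall>F\<in>K. (\<not> (\<exists>G\<in>K. F \<subset> G)) \<longrightarrow> card F = n + 1"
    using assms(1) unfolding simplicial_complex_def by (elim conjE)
  then show ?thesis using assms(2,3) by blast
qed

lemma closed_sc: "closed_complex K n \<Longrightarrow> simplicial_complex K n"
  unfolding closed_complex_def by (rule conjunct1)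

lemma closed_2: assumes "closed_complex K n" "F \<in> K" "card F = n" shows "card (facets_containing K n F) = 2"
proof -
  have "\<forall>F\<in>K. card F = n \<longrightarrow> card (facets_containing K n F) = 2"
    using assms(1) unfolding closed_complex_def by (rule conjunct2)
  then show ?thesis using assms(2,3) by blast
qed

lemma closed_flip:
  assumes cl: "closed_complex K n" and X: "X \<in> K" "card X = Suc n" and x: "x \<in> X" and n1: "1 \<le> n"
  shows "\<exists>y. y \<notin> X \<and> insert y (X - {x}) \<in> K"
    and "\<And>y y'. y \<notin> X \<Longrightarrow> insert y (X - {x}) \<in> K \<Longrightarrow> y' \<notin> X \<Longrightarrow> insert y' (X - {x}) \<in> K \<Longrightarrow> y = y'"
proof -
  have fX: "finite X" using X(2) card.infinite by fastforce
  have cXx: "card (X - {x}) = n" using X(2) x fX by simp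
  have sc: "simplicial_complex K n" using closed_sc[OF cl] .
  have Xx: "X - {x} \<in> K"
  proof -
    have "X - {x} \<noteq> {}"
    proof
      assume h: "X - {x} = {}"
      have "card (X - {x}) = 0" unfolding h by simp
      then show False using cXx n1 by simp
    qed
    then show ?thesis by (intro sc_sub[OF sc X(1)]) auto
  qed
  have c2: "card (facets_containing K n (X - {x})) = 2" using closed_2[OF cl Xx cXx] .
  then have ffin: "finite (facets_containing K n (X - {x}))" using fc_finite[of K n _ 1] by simp
  have Xin: "X \<in> facets_containing K n (X - {x})" using X by (auto simp: facets_containing_def)
  have cardins: "card (insert y (X - {x})) = Suc n" if "y \<notin> X" for y
    using that fX cXx by simp
  show "\<exists>y. y \<notin> X \<and> insert y (X - {x}) \<in> K"
  proof -
    obtain G where G: "G \<in> facets_containing K n (X - {x})" "G \<noteq> X"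
    proof -
      have "\<not> facets_containing K n (X - {x}) \<subseteq> {X}"
      proof
        assume "facets_containing K n (X - {x}) \<subseteq> {X}"
        then have "card (facets_containing K n (X - {x})) \<le> card {X}"
          by (intro card_mono) auto
        then show False using c2 by simp
      qed
      then show ?thesis using that by blast
    qed
    then have GK: "G \<in> K" "card G = Suc n" "X - {x} \<subseteq> G" by (auto simp: facets_containing_def)
    have "finite G" using GK(2) card.infinite by fastforce
    then obtain y where y: "y \<notin> X - {x}" "G = insert y (X - {x})"
      using card_insert_ex[of G "X - {x}"] GK cXx by auto
    have "y \<noteq> x"
    proof
      assume "y = x" then have "G = X" using y(2) x by auto
      then show False using G(2) by simp
    qed
    then show ?thesis using y GK by auto
  qed
  fix y y' assume a: "y \<notin> X" "insert y (X - {x}) \<in> K" "y' \<notin> X" "insert y' (X - {x}) \<in> K"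
  show "y = y'"
  proof (rule ccontr)
    assume ne: "y \<noteq> y'"
    have sub: "{X, insert y (X - {x}), insert y' (X - {x})} \<subseteq> facets_containing K n (X - {x})"
      using Xin a cardins by (auto simp: facets_containing_def)
    have d1: "X \<noteq> insert y (X - {x})" using a(1) by blast
    have d2: "X \<noteq> insert y' (X - {x})" using a(3) by blast
    have d3: "insert y (X - {x}) \<noteq> insert y' (X - {x})" using a(1) ne by blast
    have "card {X, insert y (X - {x}), insert y' (X - {x})} = 3" using d1 d2 d3 by simp
    then have "3 \<le> card (facets_containing K n (X - {x}))" using card_mono[OF ffin sub] by simp
    then show False using c2 by simp
  qed
qed

lemma opp_prop:
  assumes cl: "closed_complex K n" and X: "X \<in> K" "card X = Suc n" and x: "x \<in> X" and n1: "1 \<le> n"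
  shows "opp_vertex K X x \<notin> X" "insert (opp_vertex K X x) (X - {x}) \<in> K"
    "\<And>y. y \<notin> X \<Longrightarrow> insert y (X - {x}) \<in> K \<Longrightarrow> opp_vertex K X x = y"
proof -
  obtain y0 where y0: "y0 \<notin> X" "insert y0 (X - {x}) \<in> K" using closed_flip(1)[OF assms] by blast
  have u: "\<And>y. y \<notin> X \<and> insert y (X - {x}) \<in> K \<Longrightarrow> y = y0"
    using closed_flip(2)[OF assms] y0 by blast
  have eq: "opp_vertex K X x = y0" unfolding opp_vertex_def
  proof (rule the_equality)
    show "y0 \<notin> X \<and> insert y0 (X - {x}) \<in> K" using y0 by blast
    show "\<And>w. w \<notin> X \<and> insert w (X - {x}) \<in> K \<Longrightarrow> w = y0" by (rule u)
  qed
  show "opp_vertex K X x \<notin> X" "insert (opp_vertex K X x) (X - {x}) \<in> K" using eq y0 by simp_all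
  fix y assume "y \<notin> X" "insert y (X - {x}) \<in> K" then show "opp_vertex K X x = y" using u eq by simp
qed

context blocks begin

lemma Fac_Kmod: "S \<in> Fac Q \<Longrightarrow> S \<in> Kmod Q"
  using Fac_card[of S] by (auto simp: Kmod_def)

lemma Kmod_facet: assumes "G \<in> Kmod Q" "card G = Suc n" shows "G \<in> Fac Q"
proof -
  obtain S where S: "S \<in> Fac Q" "G \<subseteq> S" using assms by (auto simp: Kmod_def)
  have "finite S" using Fac_sub[OF S(1)] finU finite_subset by blast
  then have "G = S" using card_subset_eq[OF _ S(2)] Fac_card[OF S(1)] assms(2) by simp
  then show ?thesis using S by simp
qed

lemma fc_Kmod: "facets_containing (Kmod Q) n F = {S \<in> Fac Q. F \<subseteq> S}"
  using Kmod_facet Fac_Kmod Fac_card by (auto simp: facets_containing_def)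

lemma PiE_bij:
  assumes X: "X \<subseteq> \<Union>Q"
  shows "bij_betw (\<lambda>m. \<Union>Q - m ` Q) (PiE Q (\<lambda>C. C \<inter> X)) {S \<in> Fac Q. \<Union>Q - X \<subseteq> S}"
  unfolding bij_betw_def
proof (intro conjI)
  show "inj_on (\<lambda>m. \<Union>Q - m ` Q) (PiE Q (\<lambda>C. C \<inter> X))"
  proof (rule inj_onI)
    fix m1 m2 assume m1: "m1 \<in> PiE Q (\<lambda>C. C \<inter> X)" and m2: "m2 \<in> PiE Q (\<lambda>C. C \<inter> X)"
      and eq: "\<Union>Q - m1 ` Q = \<Union>Q - m2 ` Q"
    have s1: "m1 ` Q \<subseteq> \<Union>Q"
    proof
      fix y assume "y \<in> m1 ` Q"
      then obtain C where C: "C \<in> Q" "y = m1 C" by blast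
      then have "y \<in> C" using PiE_mem[OF m1 C(1)] by simp
      then show "y \<in> \<Union>Q" using C(1) by (rule UnionI[rotated])
    qed
    have s2: "m2 ` Q \<subseteq> \<Union>Q"
    proof
      fix y assume "y \<in> m2 ` Q"
      then obtain C where C: "C \<in> Q" "y = m2 C" by blast
      then have "y \<in> C" using PiE_mem[OF m2 C(1)] by simp
      then show "y \<in> \<Union>Q" using C(1) by (rule UnionI[rotated])
    qed
    have "m1 ` Q = \<Union>Q - (\<Union>Q - m1 ` Q)" using double_diff[OF s1 order_refl] by (rule sym)
    also have "\<dots> = \<Union>Q - (\<Union>Q - m2 ` Q)" by (simp only: eq)
    also have "\<dots> = m2 ` Q" by (rule double_diff[OF s2 order_refl])
    finally have im: "m1 ` Q = m2 ` Q" .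
    show "m1 = m2"
    proof (rule PiE_ext[OF m1 m2])
      fix C assume C: "C \<in> Q"
      have "m1 C \<in> m1 ` Q" by (rule imageI[OF C])
      then have "m1 C \<in> m2 ` Q" unfolding im .
      then obtain C' where C': "C' \<in> Q" "m1 C = m2 C'" by (rule imageE) simp
      have "m1 C \<in> C" using PiE_mem[OF m1 C] by simp
      moreover have "m2 C' \<in> C'" using PiE_mem[OF m2 C'(1)] by simp
      ultimately have "C = C'" using blk_unique[OF C C'(1)] C'(2) by simp
      then show "m1 C = m2 C" using C'(2) by simp
    qed
  qed
  show "(\<lambda>m. \<Union>Q - m ` Q) ` PiE Q (\<lambda>C. C \<inter> X) = {S \<in> Fac Q. \<Union>Q - X \<subseteq> S}"
  proof
    show "(\<lambda>m. \<Union>Q - m ` Q) ` PiE Q (\<lambda>C. C \<inter> X) \<subseteq> {S \<in> Fac Q. \<Union>Q - X \<subseteq> S}"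
    proof
      fix S assume "S \<in> (\<lambda>m. \<Union>Q - m ` Q) ` PiE Q (\<lambda>C. C \<inter> X)"
      then obtain m where m: "m \<in> PiE Q (\<lambda>C. C \<inter> X)" and S: "S = \<Union>Q - m ` Q" by blast
      have mC: "\<And>C. C \<in> Q \<Longrightarrow> m C \<in> C \<inter> X" using PiE_mem[OF m] by simp
      have "S \<in> Fac Q" unfolding S by (rule choice_Fac) (use mC in simp)
      moreover have "m ` Q \<subseteq> X" using mC by blast
      ultimately show "S \<in> {S \<in> Fac Q. \<Union>Q - X \<subseteq> S}" unfolding S by blast
    qed
    show "{S \<in> Fac Q. \<Union>Q - X \<subseteq> S} \<subseteq> (\<lambda>m. \<Union>Q - m ` Q) ` PiE Q (\<lambda>C. C \<inter> X)"
    proof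
      fix S assume "S \<in> {S \<in> Fac Q. \<Union>Q - X \<subseteq> S}"
      then have S: "S \<in> Fac Q" "\<Union>Q - X \<subseteq> S" by simp_all
      let ?m = "restrict (miss S) Q"
      have "\<forall>C\<in>Q. miss S C \<in> C \<inter> X"
      proof
        fix C assume C: "C \<in> Q"
        have "miss S C \<in> C" "miss S C \<notin> S" using miss[OF S(1) C] by simp_all
        moreover have "miss S C \<in> \<Union>Q" using C \<open>miss S C \<in> C\<close> by (rule UnionI)
        ultimately show "miss S C \<in> C \<inter> X" using S(2) by blast
      qed
      then have "?m \<in> PiE Q (\<lambda>C. C \<inter> X)" by (simp add: restrict_PiE_iff)
      moreover have "\<Union>Q - ?m ` Q = S" using Fac_repr[OF S(1)] by simp
      ultimately show "S \<in> (\<lambda>m. \<Union>Q - m ` Q) ` PiE Q (\<lambda>C. C \<inter> X)" by (metis image_eqI)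
    qed
  qed
qed

lemma count:
  assumes F: "F \<in> Kmod Q" and k: "card F + k = Suc n"
  shows "\<exists>h. card (facets_containing (Kmod Q) n F) = prod (\<lambda>C. h C + 1) Q \<and> sum h Q = k"
proof -
  obtain S0 where S0: "S0 \<in> Fac Q" "F \<subseteq> S0" using F by (auto simp: Kmod_def)
  have FU: "F \<subseteq> \<Union>Q" using S0 Fac_sub by blast
  define X where "X = \<Union>Q - F"
  have XU: "X \<subseteq> \<Union>Q" by (simp add: X_def)
  have FX: "F = \<Union>Q - X" using FU by (auto simp: X_def)
  have fF: "finite F" using FU finU finite_subset by blast
  have cX: "card X = card Q + k"
    using card_Diff_subset[OF fF FU] card_mono[OF finU FU] cardU k by (simp add: X_def)
  define g where "g C = card (C \<inter> X)" for C
  have g1: "\<forall>C\<in>Q. 1 \<le> g C"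
  proof
    fix C assume C: "C \<in> Q"
    have "miss S0 C \<in> C \<inter> X" using miss[OF S0(1) C] S0(2) C by (auto simp: X_def)
    moreover have "finite (C \<inter> X)" using finC[OF C] by simp
    ultimately show "1 \<le> g C" unfolding g_def by (metis One_nat_def Suc_leI card_gt_0_iff empty_iff)
  qed
  have Xeq: "X = (\<Union>C\<in>Q. C \<inter> X)" using XU by blast
  have sg: "sum g Q = card X" unfolding g_def
    by (subst Xeq, rule card_UN_disjoint[symmetric]) (use finQ finC disj in auto)
  have sh: "sum (\<lambda>C. g C - 1) Q = k" using sum_minus_one[OF finQ g1] sg cX by simp
  have "card (facets_containing (Kmod Q) n F) = card {S \<in> Fac Q. \<Union>Q - X \<subseteq> S}"
    by (simp add: fc_Kmod FX)
  also have "\<dots> = card (PiE Q (\<lambda>C. C \<inter> X))" using bij_betw_same_card[OF PiE_bij[OF XU]] by simp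
  also have "\<dots> = prod g Q" using card_PiE[OF finQ] by (simp add: g_def)
  also have "\<dots> = prod (\<lambda>C. (g C - 1) + 1) Q" using g1 by (intro prod.cong) auto
  finally have fin: "card (facets_containing (Kmod Q) n F) = prod (\<lambda>C. (g C - 1) + 1) Q" .
  show ?thesis
  proof (intro exI[where x="\<lambda>C. g C - 1"] conjI)
    show "card (facets_containing (Kmod Q) n F) = prod (\<lambda>C. (g C - 1) + 1) Q" by (rule fin)
    show "sum (\<lambda>C. g C - 1) Q = k" by (rule sh)
  qed
qed

lemma Kmod_sub: assumes "F \<in> Kmod Q" "G \<subseteq> F" "G \<noteq> {}" shows "G \<in> Kmod Q"
proof -
  obtain S where S: "S \<in> Fac Q" "F \<subseteq> S" using assms(1) unfolding Kmod_def by blast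
  have "G \<subseteq> S" using assms(2) S(2) by (rule subset_trans)
  then show ?thesis using S(1) assms(3) unfolding Kmod_def by blast
qed

lemma simplicial: "simplicial_complex (Kmod Q) n"
  unfolding simplicial_complex_def
proof (intro conjI)
  show "\<forall>F\<in>Kmod Q. finite F \<and> F \<noteq> {}"
  proof
    fix F assume "F \<in> Kmod Q"
    then obtain S where S: "S \<in> Fac Q" "F \<subseteq> S" "F \<noteq> {}" unfolding Kmod_def by blast
    have "finite F" using finite_subset[OF subset_trans[OF S(2) Fac_sub[OF S(1)]] finU] .
    then show "finite F \<and> F \<noteq> {}" using S(3) by simp
  qed
  show "\<forall>F\<in>Kmod Q. \<forall>G. G \<subseteq> F \<and> G \<noteq> {} \<longrightarrow> G \<in> Kmod Q"
    using Kmod_sub by blast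
  show "\<forall>F\<in>Kmod Q. \<forall>G\<in>Kmod Q. F \<inter> G \<noteq> {} \<longrightarrow> F \<inter> G \<in> Kmod Q"
  proof (intro ballI impI)
    fix F G assume "F \<in> Kmod Q" "G \<in> Kmod Q" "F \<inter> G \<noteq> {}"
    then show "F \<inter> G \<in> Kmod Q" using Kmod_sub[of F "F \<inter> G"] by simp
  qed
  show "\<forall>F\<in>Kmod Q. (\<not> (\<exists>G\<in>Kmod Q. F \<subset> G)) \<longrightarrow> card F = n + 1"
  proof (intro ballI impI)
    fix F assume F: "F \<in> Kmod Q" and mx: "\<not> (\<exists>G\<in>Kmod Q. F \<subset> G)"
    then obtain S where S: "S \<in> Fac Q" "F \<subseteq> S" unfolding Kmod_def by blast
    have "\<not> F \<subset> S" using mx Fac_Kmod[OF S(1)] by blast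
    then have "F = S" using S(2) by simp
    then show "card F = n + 1" using Fac_card S by simp
  qed
qed

lemma closed: "closed_complex (Kmod Q) n"
  unfolding closed_complex_def
proof (intro conjI ballI impI simplicial)
  fix F assume "F \<in> Kmod Q" "card F = n"
  then obtain h where "card (facets_containing (Kmod Q) n F) = prod (\<lambda>C. h C + 1) Q" "sum h Q = 1"
    using count[of F 1] by auto
  then show "card (facets_containing (Kmod Q) n F) = 2" using prod1[OF finQ] by simp
qed

lemma type34: assumes "2 \<le> n" shows "type34 (Kmod Q) n"
  unfolding type34_def
proof (intro conjI ballI impI closed)
  fix F assume "F \<in> Kmod Q" "card F = n - 1"
  then obtain h where "card (facets_containing (Kmod Q) n F) = prod (\<lambda>C. h C + 1) Q" "sum h Q = 2"
    using count[of F 2] assms by auto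
  then show "card (facets_containing (Kmod Q) n F) \<in> {3,4}" using prod2[OF finQ] by simp
qed

lemma flip_adj:
  assumes S: "S \<in> Fac Q" and C: "C \<in> Q" and x: "x \<in> C" "x \<in> S"
  shows "facet_adj (Kmod Q) n S (insert (miss S C) (S - {x}))"
proof -
  let ?T = "insert (miss S C) (S - {x})"
  have T: "?T \<in> Fac Q" by (rule flip(1)[OF assms])
  have "S \<inter> ?T = S - {x}" using miss[OF S C] by auto
  moreover have "finite S" using Fac_sub[OF S] finU finite_subset by blast
  ultimately have "card (S \<inter> ?T) = n" using Fac_card[OF S] x by simp
  then show ?thesis using Fac_Kmod[OF S] Fac_Kmod[OF T] Fac_card[OF S] Fac_card[OF T]
    by (simp add: facet_adj_def)
qed

lemma Fac_conn:
  assumes T: "T \<in> Fac Q"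
  shows "S \<in> Fac Q \<Longrightarrow> (facet_adj (Kmod Q) n)\<^sup>*\<^sup>* S T"
proof (induction "card (S - T)" arbitrary: S)
  case 0
  have fT: "finite T" using Fac_sub[OF T] finU finite_subset by blast
  have fS: "finite S" using Fac_sub[OF 0(2)] finU finite_subset by blast
  have "S \<subseteq> T" using 0 fS by (metis Diff_eq_empty_iff card_0_eq finite_Diff)
  then have "S = T" using card_subset_eq[OF fT] Fac_card T 0(2) by metis
  then show ?case by simp
next
  case (Suc d)
  then obtain x where x: "x \<in> S" "x \<notin> T" by (metis Diff_iff card.empty all_not_in_conv nat.distinct(1))
  then obtain C where C: "C \<in> Q" "x \<in> C" using Fac_sub[OF Suc(3)] by blast
  let ?c = "miss S C"
  have xT: "x = miss T C" using miss_eq[OF T C(1) C(2) x(2)] .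
  have cT: "?c \<in> T"
    using miss[OF Suc(3) C(1)] xT x(1) by (metis miss_eq[OF T C(1)])
  let ?S' = "insert ?c (S - {x})"
  have S': "?S' \<in> Fac Q" using flip(1)[OF Suc(3) C x(1)] .
  have "?S' - T = (S - T) - {x}" using cT by auto
  moreover have "finite S" using Fac_sub[OF Suc(3)] finU finite_subset by blast
  ultimately have "card (?S' - T) = d" using Suc(2) x by simp
  then have "(facet_adj (Kmod Q) n)\<^sup>*\<^sup>* ?S' T" using Suc(1) S' by simp
  moreover have "facet_adj (Kmod Q) n S ?S'" using flip_adj[OF Suc(3) C x(1)] .
  ultimately show ?case by (rule converse_rtranclp_into_rtranclp[rotated])
qed

lemma sc: "strongly_connected (Kmod Q) n"
  unfolding strongly_connected_def
  using Fac_conn Kmod_facet by simp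

lemma Union_Kmod: "\<Union>(Kmod Q) = \<Union>Q"
proof
  show "\<Union>(Kmod Q) \<subseteq> \<Union>Q" using Fac_sub by (auto simp: Kmod_def)
  show "\<Union>Q \<subseteq> \<Union>(Kmod Q)"
  proof
    fix v assume "v \<in> \<Union>Q"
    define m where "m C = (SOME y. y \<in> C \<and> y \<noteq> v)" for C
    have m: "m C \<in> C \<and> m C \<noteq> v" if "C \<in> Q" for C
    proof -
      have "\<exists>y. y \<in> C \<and> y \<noteq> v"
      proof (rule ccontr)
        assume "\<not> ?thesis" then have "C \<subseteq> {v}" by blast
        then have "card C \<le> card {v}" by (intro card_mono) auto
        then show False using two[OF that] by simp
      qed
      then show ?thesis unfolding m_def by (rule someI_ex)
    qed
    then have "\<Union>Q - m ` Q \<in> Fac Q" using choice_Fac by blast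
    moreover have "v \<in> \<Union>Q - m ` Q" using m \<open>v \<in> \<Union>Q\<close> by auto
    ultimately show "v \<in> \<Union>(Kmod Q)" using Fac_Kmod by blast
  qed
qed

lemma C_int:
  assumes S: "S \<in> Fac Q" and C: "C \<in> Q"
  shows "card (C \<inter> S) = card C - 1" "C \<inter> S \<noteq> {}"
proof -
  have "card (C - S) = 1" using miss(1)[OF S C] by simp
  moreover have "card (C - S) = card C - card (C \<inter> S)"
    using finC[OF C] by (simp add: card_Diff_subset_Int)
  moreover have "card (C \<inter> S) \<le> card C" using finC[OF C] by (simp add: card_mono)
  ultimately show "card (C \<inter> S) = card C - 1" by linarith
  then show "C \<inter> S \<noteq> {}" using two[OF C] by auto
qed

lemma opp_Fac:
  assumes cl: "closed_complex K n" and FK: "Fac Q \<subseteq> K" and n1: "1 \<le> n"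
    and S: "S \<in> Fac Q" and C: "C \<in> Q" and x: "x \<in> C" "x \<in> S"
  shows "opp_vertex K S x = miss S C"
  by (rule opp_prop(3)[OF cl _ Fac_card[OF S] x(2) n1])
     (use FK S flip(1)[OF S C x] miss[OF S C] in auto)

lemma cp_Fac:
  assumes cl: "closed_complex K n" and FK: "Fac Q \<subseteq> K" and n1: "1 \<le> n" and S: "S \<in> Fac Q"
  shows "char_partition K S = (\<lambda>C. C \<inter> S) ` Q"
proof -
  let ?r = "char_rel K S"
  have cls: "?r `` {x} = C \<inter> S" if C: "C \<in> Q" and x: "x \<in> C" "x \<in> S" for C x
  proof
    show "?r `` {x} \<subseteq> C \<inter> S"
    proof
      fix y assume "y \<in> ?r `` {x}"
      then have y: "y \<in> S" "x = y \<or> opp_vertex K S x = opp_vertex K S y" by (auto simp: char_rel_def)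
      obtain C' where C': "C' \<in> Q" "y \<in> C'" using y(1) Fac_sub[OF S] by blast
      have "x = y \<or> miss S C = miss S C'"
        using y(2) opp_Fac[OF cl FK n1 S C x] opp_Fac[OF cl FK n1 S C'(1) C'(2) y(1)] by simp
      then have "C = C'" using miss(2)[OF S C] miss(2)[OF S C'(1)] blk_unique C C' x by metis
      then show "y \<in> C \<inter> S" using C' y by simp
    qed
    show "C \<inter> S \<subseteq> ?r `` {x}"
    proof
      fix y assume y: "y \<in> C \<inter> S"
      have "opp_vertex K S x = opp_vertex K S y"
        using opp_Fac[OF cl FK n1 S C x] opp_Fac[OF cl FK n1 S C, of y] y by simp
      then show "y \<in> ?r `` {x}" using x y by (auto simp: char_rel_def)
    qed
  qed
  show ?thesis unfolding char_partition_def quotient_def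
  proof
    show "(\<Union>x\<in>S. {?r `` {x}}) \<subseteq> (\<lambda>C. C \<inter> S) ` Q"
    proof clarify
      fix x assume x: "x \<in> S"
      then obtain C where "C \<in> Q" "x \<in> C" using Fac_sub[OF S] by blast
      then show "?r `` {x} \<in> (\<lambda>C. C \<inter> S) ` Q" using cls x by blast
    qed
    show "(\<lambda>C. C \<inter> S) ` Q \<subseteq> (\<Union>x\<in>S. {?r `` {x}})"
    proof clarify
      fix C assume C: "C \<in> Q"
      then obtain x where "x \<in> C \<inter> S" using C_int(2)[OF S C] by blast
      then show "C \<inter> S \<in> (\<Union>x\<in>S. {?r `` {x}})" using cls[OF C] by blast
    qed
  qed
qed

lemma mset_Fac:
  assumes cl: "closed_complex K n" and FK: "Fac Q \<subseteq> K" and n1: "1 \<le> n" and S: "S \<in> Fac Q"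
  shows "image_mset card (mset_set (char_partition K S)) = image_mset (\<lambda>C. card C - 1) (mset_set Q)"
proof -
  have inj: "inj_on (\<lambda>C. C \<inter> S) Q"
  proof (rule inj_onI)
    fix C C' assume "C \<in> Q" "C' \<in> Q" "C \<inter> S = C' \<inter> S"
    then show "C = C'" using C_int(2)[OF S] blk_unique by (metis Int_iff all_not_in_conv)
  qed
  have "image_mset card (mset_set (char_partition K S)) = image_mset card (image_mset (\<lambda>C. C \<inter> S) (mset_set Q))"
    using cp_Fac[OF assms] image_mset_mset_set[OF inj] by simp
  also have "\<dots> = image_mset (\<lambda>C. card (C \<inter> S)) (mset_set Q)" by (simp add: multiset.map_comp comp_def)
  also have "\<dots> = image_mset (\<lambda>C. card C - 1) (mset_set Q)"
    by (rule image_mset_cong) (use C_int(1)[OF S] finQ in auto)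
  finally show ?thesis .
qed

end

lemma blocks_ins:
  assumes P: "partition_on D P" and fD: "finite D" and inj: "inj_on W P"
    and WD: "\<And>B. B \<in> P \<Longrightarrow> W B \<notin> D" and cD: "card D = Suc n"
  shows "blocks ((\<lambda>B. insert (W B) B) ` P) n"
    and "\<Union>((\<lambda>B. insert (W B) B) ` P) = D \<union> W ` P"
    and "D \<in> Fac ((\<lambda>B. insert (W B) B) ` P)"
    and "\<And>B. B \<in> P \<Longrightarrow> miss D (insert (W B) B) = W B"
    and "\<And>B. B \<in> P \<Longrightarrow> insert (W B) B \<inter> D = B"
proof -
  let ?Q = "(\<lambda>B. insert (W B) B) ` P"
  have UP: "\<Union>P = D" using partition_onD1[OF P] by simp
  have BD: "B \<subseteq> D" if "B \<in> P" for B using UP that by blast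
  have Bne: "B \<noteq> {}" if "B \<in> P" for B using partition_onD3[OF P] that by blast
  have dj: "B \<inter> B' = {}" if "B \<in> P" "B' \<in> P" "B \<noteq> B'" for B B'
    using partition_onD2[OF P] that unfolding disjoint_def by blast
  have finP: "finite P" using fD UP finite_UnionD by metis
  show int: "insert (W B) B \<inter> D = B" if "B \<in> P" for B using BD[OF that] WD[OF that] by blast
  have injQ: "inj_on (\<lambda>B. insert (W B) B) P"
  proof (rule inj_onI)
    fix B B' assume "B \<in> P" "B' \<in> P" "insert (W B) B = insert (W B') B'"
    then show "B = B'" using int by metis
  qed
  show U: "\<Union>?Q = D \<union> W ` P" using UP by blast
  have djDW: "D \<inter> W ` P = {}" using WD by blast
  have cardWP: "card (W ` P) = card P" using card_image[OF inj] .
  have cQ: "card ?Q = card P" using card_image[OF injQ] .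
  have fW: "finite (W ` P)" using finP by simp
  show "blocks ?Q n"
  proof
    show "finite ?Q" using finP by simp
    fix C assume "C \<in> ?Q"
    then obtain B where B: "B \<in> P" "C = insert (W B) B" by blast
    have fB: "finite B" using BD[OF B(1)] fD finite_subset by blast
    show "finite C" using B fB by simp
    have "W B \<notin> B" using BD[OF B(1)] WD[OF B(1)] by blast
    then have "card C = Suc (card B)" using B fB by simp
    moreover have "card B \<ge> 1" using Bne[OF B(1)] fB by (simp add: Suc_leI card_gt_0_iff)
    ultimately show "2 \<le> card C" by simp
  next
    fix C C' assume "C \<in> ?Q" "C' \<in> ?Q" "C \<noteq> C'"
    then obtain B B' where B: "B \<in> P" "C = insert (W B) B" and B': "B' \<in> P" "C' = insert (W B') B'" by blast
    have "B \<noteq> B'" using B B' \<open>C \<noteq> C'\<close> by blast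
    then have "W B \<noteq> W B'" "B \<inter> B' = {}" using inj B(1) B'(1) dj inj_on_contraD by metis+
    then show "C \<inter> C' = {}" using B B' BD WD by blast
  next
    show "card (\<Union>?Q) = card ?Q + Suc n"
      using U card_Un_disjoint[OF fD fW djDW] cardWP cQ cD by simp
  qed
  have DQ: "insert (W B) B - D = {W B}" if "B \<in> P" for B using BD[OF that] WD[OF that] by blast
  show "D \<in> Fac ?Q" unfolding Fac_def using U DQ by auto
  show "miss D (insert (W B) B) = W B" if "B \<in> P" for B using DQ[OF that] by (simp add: miss_def)
qed

lemma fc_two:
  assumes cl: "closed_complex K n" and F: "F \<in> K" "card F = n"
    and A: "A \<in> facets_containing K n F" and B: "B \<in> facets_containing K n F"
    and G: "G \<in> facets_containing K n F" and AB: "A \<noteq> B"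
  shows "G = A \<or> G = B"
proof (rule ccontr)
  assume "\<not> ?thesis"
  then have "G \<noteq> A" "G \<noteq> B" by simp_all
  then have "card {A, B, G} = 3" using AB by simp
  moreover have c2: "card (facets_containing K n F) = 2" by (rule closed_2[OF cl F])
  then have "finite (facets_containing K n F)" using fc_finite[of K n F 1] by simp
  moreover have "{A, B, G} \<subseteq> facets_containing K n F" using A B G by blast
  ultimately have "3 \<le> card (facets_containing K n F)" using card_mono by metis
  then show False using c2 by simp
qed

lemma neq_wit: "x \<in> A \<Longrightarrow> x \<notin> B \<Longrightarrow> A \<noteq> B" by blast

lemma fc_mem: "G \<in> K \<Longrightarrow> card G = Suc n \<Longrightarrow> E \<subseteq> G \<Longrightarrow> G \<in> facets_containing K n E"
  by (simp add: facets_containing_def)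

lemma square:
  assumes t: "type34 K n" and n2: "2 \<le> n" and cE: "card E = n - 1"
    and nE: "a \<notin> E" "b \<notin> E" "c \<notin> E" "d \<notin> E"
    and dist: "a \<noteq> b" "a \<noteq> c" "a \<noteq> d" "b \<noteq> c" "b \<noteq> d" "c \<noteq> d"
    and X1: "insert a (insert b E) \<in> K" and X2: "insert b (insert c E) \<in> K"
    and X3: "insert c (insert d E) \<in> K"
  shows "insert d (insert a E) \<in> K"
proof (rule ccontr)
  assume neg: "insert d (insert a E) \<notin> K"
  have cl: "closed_complex K n" using t unfolding type34_def by (rule conjunct1)
  have sc: "simplicial_complex K n" by (rule closed_sc[OF cl])
  have cE0: "0 < card E" using cE n2 by simp
  have fE: "finite E" using cE0 by (rule card_ge_0_finite)
  have cS: "card (insert p (insert q E)) = Suc n" if "p \<notin> E" "q \<notin> E" "p \<noteq> q" for p q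
    using that fE cE n2 by simp
  have n1: "1 \<le> n" using n2 by simp
  have X1c: "card (insert a (insert b E)) = Suc n" by (rule cS[OF nE(1,2) dist(1)])
  have X3c: "card (insert c (insert d E)) = Suc n" by (rule cS[OF nE(3,4) dist(6)])
  have bX1: "b \<in> insert a (insert b E)" by simp
  have cX3: "c \<in> insert c (insert d E)" by simp
  obtain y where y: "y \<notin> insert a (insert b E)" "insert y (insert a (insert b E) - {b}) \<in> K"
    using closed_flip(1)[OF cl X1 X1c bX1 n1] by blast
  have e1: "insert a (insert b E) - {b} = insert a E" using nE(2) dist(1) by blast
  have G4: "insert y (insert a E) \<in> K" using y(2) unfolding e1 .
  have yd: "y \<noteq> d"
  proof
    assume "y = d" then show False using G4 neg by simp
  qed
  obtain y' where y': "y' \<notin> insert c (insert d E)" "insert y' (insert c (insert d E) - {c}) \<in> K"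
    using closed_flip(1)[OF cl X3 X3c cX3 n1] by blast
  have e3: "insert c (insert d E) - {c} = insert d E" using nE(3) dist(6) by blast
  have G5: "insert y' (insert d E) \<in> K" using y'(2) unfolding e3 .
  have ya: "y' \<noteq> a"
  proof
    assume "y' = a" then have "insert a (insert d E) \<in> K" using G5 by simp
    then show False using neg by (simp add: insert_commute)
  qed
  have Ene: "E \<noteq> {}" using cE0 by auto
  have EK: "E \<in> K" by (rule sc_sub[OF sc X1]) (use Ene in auto)
  have "\<forall>F\<in>K. card F = n - 1 \<longrightarrow> card (facets_containing K n F) \<in> {3, 4}"
    using t unfolding type34_def by (rule conjunct2)
  then have c34: "card (facets_containing K n E) \<in> {3,4}" using EK cE by blast
  then have "0 < card (facets_containing K n E)" by auto
  then have ffin: "finite (facets_containing K n E)" by (rule card_ge_0_finite)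
  let ?G1 = "insert a (insert b E)" and ?G2 = "insert b (insert c E)" and ?G3 = "insert c (insert d E)"
    and ?G4 = "insert y (insert a E)" and ?G5 = "insert y' (insert d E)"
  have yy: "y \<notin> E" "y \<noteq> a" "y \<noteq> b" using y(1) by simp_all
  have yy': "y' \<notin> E" "y' \<noteq> c" "y' \<noteq> d" using y'(1) by simp_all
  have m1: "?G1 \<in> facets_containing K n E" by (rule fc_mem[OF X1 X1c]) blast
  have m2: "?G2 \<in> facets_containing K n E" by (rule fc_mem[OF X2 cS[OF nE(2,3) dist(4)]]) blast
  have m3: "?G3 \<in> facets_containing K n E" by (rule fc_mem[OF X3 X3c]) blast
  have m4: "?G4 \<in> facets_containing K n E" by (rule fc_mem[OF G4 cS[OF yy(1) nE(1) yy(2)]]) blast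
  have m5: "?G5 \<in> facets_containing K n E" by (rule fc_mem[OF G5 cS[OF yy'(1) nE(4) yy'(3)]]) blast
  have sub: "{?G1, ?G2, ?G3, ?G4, ?G5} \<subseteq> facets_containing K n E"
    using m1 m2 m3 m4 m5 by simp
  have d12: "?G1 \<noteq> ?G2" by (rule neq_wit[of a]) (use nE dist in simp_all)
  have d13: "?G1 \<noteq> ?G3" by (rule neq_wit[of a]) (use nE dist in simp_all)
  have d14: "?G1 \<noteq> ?G4" by (rule neq_wit[of b]) (use nE dist yy in simp_all)
  have d15: "?G1 \<noteq> ?G5" by (rule neq_wit[of a]) (use nE dist ya in simp_all)
  have d23: "?G2 \<noteq> ?G3" by (rule neq_wit[of b]) (use nE dist in simp_all)
  have d24: "?G2 \<noteq> ?G4" by (rule neq_wit[of b]) (use nE dist yy in simp_all)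
  have d25: "?G2 \<noteq> ?G5" by (rule neq_wit[of c]) (use nE dist yy' in simp_all)
  have d34: "?G3 \<noteq> ?G4" by (rule neq_wit[of d]) (use nE dist yd in simp_all)
  have d35: "?G3 \<noteq> ?G5" by (rule neq_wit[of c]) (use nE dist yy' in simp_all)
  have d45: "?G4 \<noteq> ?G5" by (rule neq_wit[of a]) (use nE dist ya in simp_all)
  have "card {?G1, ?G2, ?G3, ?G4, ?G5} = 5"
    using d12 d13 d14 d15 d23 d24 d25 d34 d35 d45 by simp
  then have "5 \<le> card (facets_containing K n E)" using card_mono[OF ffin sub] by simp
  then show False using c34 by auto
qed

lemma no_big3:
  assumes cl: "closed_complex K n" and n1: "1 \<le> n" and H: "H \<in> K" and cH: "n + 3 \<le> card H"
  shows False
proof -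
  have sc: "simplicial_complex K n" by (rule closed_sc[OF cl])
  obtain H3 where H3: "H3 \<subseteq> H" "card H3 = n + 3" "finite H3" using obtain_subset_with_card_n[OF cH] by blast
  have "3 \<le> card H3" using H3 by simp
  then obtain T where T: "T \<subseteq> H3" "card T = 3" "finite T" using obtain_subset_with_card_n by blast
  then obtain p q r where pqr: "T = {p,q,r}" "p \<noteq> q" "q \<noteq> r" "p \<noteq> r" using card_3_iff by metis
  define F0 where "F0 = H3 - T"
  have cF0: "card F0 = n" unfolding F0_def using card_Diff_subset[OF T(3) T(1)] H3 T by simp
  have F0ne: "F0 \<noteq> {}" using cF0 n1 by (intro notI) simp
  have F0K: "F0 \<in> K" by (rule sc_sub[OF sc H]) (use F0ne H3 in \<open>auto simp: F0_def\<close>)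
  have pF: "p \<notin> F0" "q \<notin> F0" "r \<notin> F0" using pqr by (auto simp: F0_def)
  have fF0: "finite F0" using H3(3) by (simp add: F0_def)
  have mem: "insert z F0 \<in> facets_containing K n F0" if z: "z \<in> T" "z \<notin> F0" for z
  proof (rule fc_mem)
    show "insert z F0 \<in> K" by (rule sc_sub[OF sc H]) (use z T H3 in \<open>auto simp: F0_def\<close>)
    show "card (insert z F0) = Suc n" using z fF0 cF0 by simp
  qed auto
  have c2: "card (facets_containing K n F0) = 2" by (rule closed_2[OF cl F0K cF0])
  then have ffin: "finite (facets_containing K n F0)" using fc_finite[of K n F0 1] by simp
  have "{insert p F0, insert q F0, insert r F0} \<subseteq> facets_containing K n F0"
    using mem pqr pF by simp
  moreover have "card {insert p F0, insert q F0, insert r F0} = 3"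
  proof -
    have "insert p F0 \<noteq> insert q F0" by (rule neq_wit[of p]) (use pF pqr in simp_all)
    moreover have "insert p F0 \<noteq> insert r F0" by (rule neq_wit[of p]) (use pF pqr in simp_all)
    moreover have "insert q F0 \<noteq> insert r F0" by (rule neq_wit[of q]) (use pF pqr in simp_all)
    ultimately show ?thesis by simp
  qed
  ultimately have "3 \<le> card (facets_containing K n F0)" using card_mono[OF ffin] by metis
  then show False using c2 by simp
qed

lemma face_bound:
  assumes cl: "closed_complex K n" and n1: "1 \<le> n" and H: "H \<in> K"
  shows "card H \<le> n + 1"
proof (rule ccontr)
  assume "\<not> ?thesis"
  then have "n + 2 \<le> card H" by simp
  then obtain H2 where H2: "H2 \<subseteq> H" "card H2 = n + 2" "finite H2" using obtain_subset_with_card_n by blast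
  have sc: "simplicial_complex K n" by (rule closed_sc[OF cl])
  have H2K: "H2 \<in> K" by (rule sc_sub[OF sc H H2(1)]) (use H2(2) in auto)
  have "\<exists>G\<in>K. H2 \<subset> G"
  proof (rule ccontr)
    assume "\<not> ?thesis"
    then have "card H2 = n + 1" by (rule sc_max[OF sc H2K])
    then show False using H2 by simp
  qed
  then obtain G where G: "G \<in> K" "H2 \<subset> G" by blast
  have "finite G" using sc_fin[OF sc G(1)] by simp
  then have "card H2 < card G" using G(2) by (rule psubset_card_mono)
  then have "n + 3 \<le> card G" using H2 by simp
  then show False using no_big3[OF cl n1 G(1)] by simp
qed

lemma face_in_facet:
  assumes cl: "closed_complex K n" and n1: "1 \<le> n" and F: "F \<in> K"
  shows "\<exists>G. G \<in> K \<and> card G = Suc n \<and> F \<subseteq> G"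
proof -
  have sc: "simplicial_complex K n" by (rule closed_sc[OF cl])
  let ?P = "\<lambda>G. G \<in> K \<and> F \<subseteq> G"
  have "\<exists>G. ?P G \<and> (\<forall>G'. ?P G' \<longrightarrow> card G' \<le> card G)"
  proof (rule ex_has_greatest_nat[where b = "n + 2"])
    show "?P F" using F by simp
    show "\<forall>G. ?P G \<longrightarrow> card G < n + 2" using face_bound[OF cl n1] by fastforce
  qed
  then obtain G where G: "G \<in> K" "F \<subseteq> G" and mx: "\<And>G'. ?P G' \<Longrightarrow> card G' \<le> card G" by blast
  have "\<not> (\<exists>G'\<in>K. G \<subset> G')"
  proof
    assume "\<exists>G'\<in>K. G \<subset> G'"
    then obtain G' where G': "G' \<in> K" "G \<subset> G'" by blast
    have "finite G'" using sc_fin[OF sc G'(1)] by simp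
    then have "card G < card G'" using G'(2) by (rule psubset_card_mono)
    moreover have "card G' \<le> card G" using mx G' G(2) by blast
    ultimately show False by simp
  qed
  then have "card G = n + 1" by (rule sc_max[OF sc G(1)])
  then show ?thesis using G by auto
qed

lemma cx_structure:
  fixes K :: "'a set set"
  assumes n2: "2 \<le> n" and scK: "strongly_connected K n" and t: "type34 K n"
    and D: "D \<in> K" "card D = Suc n"
  shows "\<exists>W. partition_on D (char_partition K D) \<and> inj_on W (char_partition K D) \<and>
           (\<forall>B\<in>char_partition K D. W B \<notin> D) \<and>
           K = Kmod ((\<lambda>B. insert (W B) B) ` char_partition K D)"
proof -
  have cl: "closed_complex K n" using t unfolding type34_def by (rule conjunct1)
  have scx: "simplicial_complex K n" by (rule closed_sc[OF cl])
  have n1: "1 \<le> n" using n2 by simp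
  have fD: "finite D" using D(2) card.infinite by fastforce
  define opp where "opp x = opp_vertex K D x" for x
  have oppD: "opp x \<notin> D" if "x \<in> D" for x unfolding opp_def by (rule opp_prop(1)[OF cl D that n1])
  have oppK: "insert (opp x) (D - {x}) \<in> K" if "x \<in> D" for x unfolding opp_def by (rule opp_prop(2)[OF cl D that n1])
  let ?r = "char_rel K D"
  have r_eq: "?r = {(x, y). x \<in> D \<and> y \<in> D \<and> opp x = opp y}"
    unfolding char_rel_def opp_def by auto
  have eqv: "equiv D ?r"
    unfolding r_eq equiv_def refl_on_def sym_def trans_def by auto
  define P where "P = char_partition K D"
  have PD: "P = D // ?r" by (simp add: P_def char_partition_def)
  have part: "partition_on D P" unfolding PD by (rule partition_on_quotient[OF eqv])
  have cls: "\<exists>x\<in>D. B = {y \<in> D. opp y = opp x}" if "B \<in> P" for B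
  proof -
    from that obtain x where x: "B = ?r `` {x}" "x \<in> D" unfolding PD by (rule quotientE)
    have "?r `` {x} = {y \<in> D. opp y = opp x}" unfolding r_eq using x(2) by auto
    then show ?thesis using x by blast
  qed
  define W where "W B = opp (SOME x. x \<in> B)" for B
  have WB: "W B = opp y" if BP: "B \<in> P" and yB: "y \<in> B" for B y
  proof -
    obtain x where x: "x \<in> D" "B = {y \<in> D. opp y = opp x}" using cls[OF BP] by blast
    have "(SOME x. x \<in> B) \<in> B" using yB by (rule someI)
    then have "opp (SOME x. x \<in> B) = opp x" using x by blast
    moreover have "opp y = opp x" using yB x by blast
    ultimately show ?thesis by (simp add: W_def)
  qed
  have BD: "B \<subseteq> D" if BP: "B \<in> P" for B
    using Union_upper[OF BP] partition_onD1[OF part] by simp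
  have Bne: "B \<noteq> {}" if BP: "B \<in> P" for B
  proof
    assume "B = {}" then show False using partition_onD3[OF part] BP by simp
  qed
  have WD: "W B \<notin> D" if BP: "B \<in> P" for B
  proof -
    obtain y where yB: "y \<in> B" using Bne[OF BP] by blast
    have "y \<in> D" using BD[OF BP] yB by (rule subsetD)
    then show ?thesis using WB[OF BP yB] oppD by simp
  qed
  have inj: "inj_on W P"
  proof (rule inj_onI)
    fix B B' assume B: "B \<in> P" and B': "B' \<in> P" and eq: "W B = W B'"
    obtain x where x: "x \<in> D" "B = {y \<in> D. opp y = opp x}" using cls[OF B] by blast
    obtain x' where x': "x' \<in> D" "B' = {y \<in> D. opp y = opp x'}" using cls[OF B'] by blast
    have "W B = opp x" using WB[OF B] x by simp
    moreover have "W B' = opp x'" using WB[OF B'] x' by simp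
    ultimately show "B = B'" using x x' eq by simp
  qed
  define Q where "Q = (\<lambda>B. insert (W B) B) ` P"
  interpret blocks Q n unfolding Q_def by (rule blocks_ins(1)[OF part fD inj WD D(2)])
  have UQ: "\<Union>Q = D \<union> W ` P" unfolding Q_def by (rule blocks_ins(2)[OF part fD inj WD D(2)])
  have DF: "D \<in> Fac Q" unfolding Q_def by (rule blocks_ins(3)[OF part fD inj WD D(2)])
  have sub_D: "S = D" if "S \<in> Fac Q" "S \<subseteq> D" for S
    using card_subset_eq[OF fD that(2)] Fac_card[OF that(1)] D(2) by simp
  have finS: "finite S" if "S \<in> Fac Q" for S using Fac_sub[OF that] finU finite_subset by blast
  have wdata: "\<exists>B c. B \<in> P \<and> w = W B \<and> insert w B \<in> Q \<and> c = miss S (insert w B) \<and> c \<in> B \<and> c \<notin> S \<and> opp c = w"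
    if S: "S \<in> Fac Q" and w: "w \<in> S" "w \<notin> D" for S w
  proof -
    have "w \<in> \<Union>Q" using Fac_sub[OF S] w(1) by blast
    then obtain B where B: "B \<in> P" "w = W B" using UQ w(2) by blast
    have CQ: "insert w B \<in> Q" unfolding Q_def using B by blast
    let ?c = "miss S (insert w B)"
    have "?c \<in> insert w B" "?c \<notin> S" using miss[OF S CQ] by simp_all
    then have cB: "?c \<in> B" using w(1) by auto
    have "opp ?c = w" using WB[OF B(1) cB] B(2) by simp
    then show ?thesis using B CQ cB \<open>?c \<notin> S\<close> by blast
  qed
  have A1: "\<forall>S. S \<in> Fac Q \<longrightarrow> card (S - D) = d \<longrightarrow> S \<in> K" for d
  proof (induction d rule: less_induct)
    case (less d)
    show ?case
    proof (intro allI impI)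
      fix S assume S: "S \<in> Fac Q" and cd: "card (S - D) = d"
      show "S \<in> K"
      proof (cases "d = 0")
        case True
        then have "S \<subseteq> D" using cd finS[OF S] by auto
        then show ?thesis using sub_D[OF S] D(1) by simp
      next
        case False
        then obtain w where w: "w \<in> S" "w \<notin> D" using cd by (metis Diff_iff card.empty equals0I)
        obtain B c where Bc: "B \<in> P" "w = W B" "insert w B \<in> Q" "c = miss S (insert w B)" "c \<in> B" "c \<notin> S" "opp c = w"
          using wdata[OF S w] by blast
        have cD: "c \<in> D" using BD[OF Bc(1)] Bc(5) by blast
        let ?S0 = "insert c (S - {w})"
        have S0: "?S0 \<in> Fac Q" using flip(1)[OF S Bc(3) _ w(1)] Bc(4) by simp
        have S0D: "?S0 - D = (S - D) - {w}" using cD by blast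
        have cS0: "card (?S0 - D) = d - 1" using S0D cd w finS[OF S] by simp
        show ?thesis
        proof (cases "d = 1")
          case True
          then have "?S0 \<subseteq> D" using cS0 finS[OF S0] by auto
          then have "?S0 = D" using sub_D[OF S0] by simp
          moreover have "S = insert w (?S0 - {c})" using w(1) Bc(6) by auto
          ultimately have "S = insert (opp c) (D - {c})" using Bc(7) by simp
          then show ?thesis using oppK[OF cD] by simp
        next
          case False
          with \<open>d \<noteq> 0\<close> have d2: "2 \<le> d" by simp
          have "card ((S - D) - {w}) \<noteq> 0" using cd w d2 finS[OF S] by simp
          then obtain w' where w': "w' \<in> S" "w' \<notin> D" "w' \<noteq> w" by (metis Diff_iff card.empty insertI1 equals0I)
          obtain B' c' where Bc': "B' \<in> P" "w' = W B'" "insert w' B' \<in> Q" "c' = miss S (insert w' B')" "c' \<in> B'" "c' \<notin> S" "opp c' = w'"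
            using wdata[OF S w'(1,2)] by blast
          have c'D: "c' \<in> D" using BD[OF Bc'(1)] Bc'(5) by blast
          have CC: "insert w B \<noteq> insert w' B'" using w' BD[OF Bc(1)] by blast
          have cc: "c \<noteq> c'" using Bc(7) Bc'(7) w'(3) by blast
          let ?R' = "insert c' (S - {w'})"
          have R': "?R' \<in> Fac Q" using flip(1)[OF S Bc'(3) _ w'(1)] Bc'(4) by simp
          have cR': "card (?R' - D) = d - 1"
          proof -
            have "?R' - D = (S - D) - {w'}" using c'D by blast
            then show ?thesis using cd w' finS[OF S] by simp
          qed
          have ms0: "miss ?S0 (insert w' B') = c'"
            using flip(3)[OF S Bc(3) _ w(1), of "insert w' B'"] Bc(4) Bc'(3,4) CC by simp
          have w'S0: "w' \<in> ?S0" using w' by simp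
          let ?R = "insert c' (?S0 - {w'})"
          have R: "?R \<in> Fac Q" using flip(1)[OF S0 Bc'(3) _ w'S0] ms0 by simp
          have cR: "card (?R - D) = d - 2"
          proof -
            have "?R - D = ((S - D) - {w}) - {w'}" using c'D cD by blast
            then show ?thesis using cd w w' finS[OF S] by simp
          qed
          have S0K: "?S0 \<in> K" using less[of "d - 1"] S0 cS0 d2 by simp
          have R'K: "?R' \<in> K" using less[of "d - 1"] R' cR' d2 by simp
          have RK: "?R \<in> K" using less[of "d - 2"] R cR d2 by simp
          define E where "E = S - {w, w'}"
          have cE: "card E = n - 1" using Fac_card[OF S] w(1) w'(1,3) finS[OF S] by (simp add: E_def)
          have nE: "w' \<notin> E" "c \<notin> E" "c' \<notin> E" "w \<notin> E" using Bc(6) Bc'(6) by (auto simp: E_def)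
          have dst: "w' \<noteq> c" "w' \<noteq> c'" "w' \<noteq> w" "c \<noteq> c'" "c \<noteq> w" "c' \<noteq> w"
            using w w' cD c'D cc by auto
          have e1: "insert w' (insert c E) = ?S0" using w'(1,3) by (auto simp: E_def)
          have e2: "insert c (insert c' E) = ?R" using w'(1,3) dst by (auto simp: E_def)
          have e3: "insert c' (insert w E) = ?R'" using w(1) w'(3) by (auto simp: E_def)
          have e4: "insert w (insert w' E) = S" using w(1) w'(1) by (auto simp: E_def)
          have "insert w (insert w' E) \<in> K"
            by (rule square[OF t n2 cE nE dst]) (use e1 e2 e3 S0K RK R'K in simp_all)
          then show ?thesis using e4 by simp
        qed
      qed
    qed
  qed
  have FK: "S \<in> K" if "S \<in> Fac Q" for S using A1 that by blast
  have A2: "G \<in> Fac Q" if G: "G \<in> K" "card G = Suc n" for G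
  proof -
    have "(facet_adj K n)\<^sup>*\<^sup>* D G" using scK D G unfolding strongly_connected_def by simp
    then show ?thesis
    proof (induction rule: rtranclp_induct)
      case base then show ?case by (rule DF)
    next
      case (step X G)
      have adj: "X \<in> K" "G \<in> K" "card X = n + 1" "card G = n + 1" "card (X \<inter> G) = n"
        using step(2) unfolding facet_adj_def by simp_all
      have fX: "finite X" using finS[OF step(3)] .
      have "card (X - G) = 1" using adj fX by (simp add: card_Diff_subset_Int)
      then obtain x where x: "X - G = {x}" by (rule card_1_singletonE)
      have xX: "x \<in> X" using x by blast
      have XxG: "X - {x} \<subseteq> G" using x by blast
      obtain C where C: "C \<in> Q" "x \<in> C" using Fac_sub[OF step(3)] xX by blast
      let ?T = "insert (miss X C) (X - {x})"
      have T: "?T \<in> Fac Q" by (rule flip(1)[OF step(3) C xX])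
      have cXx: "card (X - {x}) = n" using adj xX fX by simp
      have Xxne: "X - {x} \<noteq> {}"
      proof
        assume h: "X - {x} = {}"
        have "card (X - {x}) = 0" unfolding h by simp
        then show False using cXx n1 by simp
      qed
      have Xx: "X - {x} \<in> K" by (rule sc_sub[OF scx adj(1)]) (use Xxne in auto)
      have m1: "X \<in> facets_containing K n (X - {x})" using adj by (auto simp: facets_containing_def)
      have m2: "?T \<in> facets_containing K n (X - {x})"
        using FK[OF T] Fac_card[OF T] by (auto simp: facets_containing_def)
      have m3: "G \<in> facets_containing K n (X - {x})" using adj XxG by (auto simp: facets_containing_def)
      have ne: "X \<noteq> ?T" using miss[OF step(3) C(1)] by blast
      have "G = X \<or> G = ?T" by (rule fc_two[OF cl Xx cXx m1 m2 m3 ne])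
      then show ?case using step(3) T by blast
    qed
  qed
  have "K = Kmod Q"
  proof
    show "K \<subseteq> Kmod Q"
    proof
      fix F assume F: "F \<in> K"
      obtain G where G: "G \<in> K" "card G = Suc n" "F \<subseteq> G" using face_in_facet[OF cl n1 F] by blast
      have "F \<noteq> {}" using sc_fin[OF scx F] by simp
      then show "F \<in> Kmod Q" using A2[OF G(1,2)] G(3) unfolding Kmod_def by blast
    qed
    show "Kmod Q \<subseteq> K"
    proof
      fix F assume "F \<in> Kmod Q"
      then obtain S where S: "S \<in> Fac Q" "F \<subseteq> S" "F \<noteq> {}" unfolding Kmod_def by blast
      show "F \<in> K" by (rule sc_sub[OF scx FK[OF S(1)] S(2,3)])
    qed
  qed
  then show ?thesis using part inj WD unfolding Q_def P_def by blast
qed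

lemma iso_blocks:
  assumes part: "partition_on D P" and fD: "finite D" and inj1: "inj_on W1 P" and inj2: "inj_on W2 P"
    and WD1: "\<And>B. B \<in> P \<Longrightarrow> W1 B \<notin> D" and WD2: "\<And>B. B \<in> P \<Longrightarrow> W2 B \<notin> D"
    and cD: "card D = Suc n"
  shows "\<exists>f. complex_iso f (Kmod ((\<lambda>B. insert (W1 B) B) ` P)) (Kmod ((\<lambda>B. insert (W2 B) B) ` P))
             \<and> (\<forall>i\<in>D. f i = i)"
proof -
  define Q1 where "Q1 = (\<lambda>B. insert (W1 B) B) ` P"
  define Q2 where "Q2 = (\<lambda>B. insert (W2 B) B) ` P"
  interpret b1: blocks Q1 n unfolding Q1_def by (rule blocks_ins(1)[OF part fD inj1 WD1 cD])
  interpret b2: blocks Q2 n unfolding Q2_def by (rule blocks_ins(1)[OF part fD inj2 WD2 cD])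
  have U1: "\<Union>Q1 = D \<union> W1 ` P" unfolding Q1_def by (rule blocks_ins(2)[OF part fD inj1 WD1 cD])
  have U2: "\<Union>Q2 = D \<union> W2 ` P" unfolding Q2_def by (rule blocks_ins(2)[OF part fD inj2 WD2 cD])
  have BD: "B \<subseteq> D" if BP: "B \<in> P" for B
    using Union_upper[OF BP] partition_onD1[OF part] by simp
  define f where "f v = (if v \<in> D then v else W2 (inv_into P W1 v))" for v
  have fD': "f v = v" if "v \<in> D" for v using that by (simp add: f_def)
  have fW: "f (W1 B) = W2 B" if BP: "B \<in> P" for B
    using WD1[OF BP] inv_into_f_f[OF inj1 BP] by (simp add: f_def)
  have injf: "inj_on f (\<Union>Q1)"
  proof (rule inj_onI)
    fix u v assume u: "u \<in> \<Union>Q1" and v: "v \<in> \<Union>Q1" and eq: "f u = f v"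
    show "u = v"
    proof (cases "u \<in> D")
      case True
      show ?thesis
      proof (cases "v \<in> D")
        case True then show ?thesis using eq fD' \<open>u \<in> D\<close> by simp
      next
        case False
        then obtain B where B: "B \<in> P" "v = W1 B" using v U1 by blast
        then have "f v \<notin> D" using fW WD2 by simp
        then show ?thesis using eq fD' \<open>u \<in> D\<close> by simp
      qed
    next
      case False
      then obtain B where B: "B \<in> P" "u = W1 B" using u U1 by blast
      show ?thesis
      proof (cases "v \<in> D")
        case True
        have "f u \<notin> D" using fW WD2 B by simp
        then show ?thesis using eq fD' True by simp
      next
        case False
        then obtain B' where B': "B' \<in> P" "v = W1 B'" using v U1 by blast
        have "W2 B = W2 B'" using eq fW B B' by simp
        then have "B = B'" using inj_onD[OF inj2 _ B(1) B'(1)] by simp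
        then show ?thesis using B B' by simp
      qed
    qed
  qed
  have imf: "f ` \<Union>Q1 = \<Union>Q2"
  proof -
    have "f ` D = D" using fD' by simp
    moreover have "f ` (W1 ` P) = W2 ` P" using fW by (simp add: image_image)
    ultimately show ?thesis using U1 U2 by (simp add: image_Un)
  qed
  have fC: "f ` insert (W1 B) B = insert (W2 B) B" if BP: "B \<in> P" for B
  proof -
    have "f ` B = (\<lambda>v. v) ` B"
    proof (rule image_cong)
      fix v assume "v \<in> B" then show "f v = v" using fD' BD[OF BP] by blast
    qed simp
    then have "f ` B = B" by simp
    then show ?thesis using fW[OF BP] by simp
  qed
  have C1U: "insert (W1 B) B \<subseteq> \<Union>Q1" if BP: "B \<in> P" for B
  proof -
    have "insert (W1 B) B \<in> Q1" unfolding Q1_def using BP by (rule imageI)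
    then show ?thesis by (rule Union_upper)
  qed
  have trans: "S \<in> Fac Q1 \<longleftrightarrow> f ` S \<in> Fac Q2" if SU: "S \<subseteq> \<Union>Q1" for S
  proof -
    have cc: "card (insert (W2 B) B - f ` S) = card (insert (W1 B) B - S)" if BP: "B \<in> P" for B
    proof -
      have sub1: "insert (W1 B) B - S \<subseteq> \<Union>Q1" by (rule subset_trans[OF Diff_subset C1U[OF BP]])
      have "insert (W2 B) B - f ` S = f ` (insert (W1 B) B) - f ` S" using fC[OF BP] by simp
      also have "\<dots> = f ` (insert (W1 B) B - S)" by (rule inj_on_image_set_diff[OF injf sub1 SU, symmetric])
      finally have e: "insert (W2 B) B - f ` S = f ` (insert (W1 B) B - S)" .
      have "inj_on f (insert (W1 B) B - S)" by (rule inj_on_subset[OF injf sub1])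
      then show ?thesis unfolding e by (rule card_image)
    qed
    have fSU: "f ` S \<subseteq> \<Union>Q2" using image_mono[OF SU, of f] imf by simp
    have e1: "S \<in> Fac Q1 \<longleftrightarrow> (\<forall>B\<in>P. card (insert (W1 B) B - S) = 1)"
      unfolding Fac_def Q1_def using SU by (simp add: Q1_def)
    have e2: "f ` S \<in> Fac Q2 \<longleftrightarrow> (\<forall>B\<in>P. card (insert (W2 B) B - f ` S) = 1)"
      unfolding Fac_def Q2_def using fSU by (simp add: Q2_def)
    show ?thesis unfolding e1 e2 using cc by simp
  qed
  have "complex_iso f (Kmod Q1) (Kmod Q2)"
    unfolding complex_iso_def b1.Union_Kmod b2.Union_Kmod
  proof (intro conjI allI impI)
    show "bij_betw f (\<Union>Q1) (\<Union>Q2)" unfolding bij_betw_def using injf imf by simp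
    fix F assume FU: "F \<subseteq> \<Union>Q1"
    show "F \<in> Kmod Q1 \<longleftrightarrow> f ` F \<in> Kmod Q2"
    proof
      assume "F \<in> Kmod Q1"
      then obtain S where S: "S \<in> Fac Q1" "F \<subseteq> S" "F \<noteq> {}" unfolding Kmod_def by blast
      have "f ` S \<in> Fac Q2" using trans[OF b1.Fac_sub[OF S(1)]] S(1) by simp
      moreover have "f ` F \<subseteq> f ` S" using S(2) by (rule image_mono)
      moreover have "f ` F \<noteq> {}" using S(3) by simp
      ultimately show "f ` F \<in> Kmod Q2" unfolding Kmod_def by blast
    next
      assume "f ` F \<in> Kmod Q2"
      then obtain S2 where S2: "S2 \<in> Fac Q2" "f ` F \<subseteq> S2" "f ` F \<noteq> {}" unfolding Kmod_def by blast
      define S1 where "S1 = {v \<in> \<Union>Q1. f v \<in> S2}"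
      have S1U: "S1 \<subseteq> \<Union>Q1" by (auto simp: S1_def)
      have "f ` S1 = S2"
      proof
        show "f ` S1 \<subseteq> S2" by (auto simp: S1_def)
        show "S2 \<subseteq> f ` S1"
        proof
          fix z assume z: "z \<in> S2"
          then have "z \<in> f ` \<Union>Q1" using b2.Fac_sub[OF S2(1)] imf by blast
          then obtain v where "v \<in> \<Union>Q1" "z = f v" by blast
          then show "z \<in> f ` S1" using z by (auto simp: S1_def)
        qed
      qed
      then have "S1 \<in> Fac Q1" using trans[OF S1U] S2(1) by simp
      moreover have "F \<subseteq> S1" using FU S2(2) by (auto simp: S1_def)
      moreover have "F \<noteq> {}" using S2(3) by simp
      ultimately show "F \<in> Kmod Q1" unfolding Kmod_def by blast
    qed
  qed
  then show ?thesis using fD' unfolding Q1_def Q2_def by blast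
qed

theorem lemma2p1:
  fixes n :: nat and P :: "nat set set"
  assumes "n \<ge> 2" and "partition_on {1..n+1} P"
  shows "(\<exists>K :: nat set set. strongly_connected K n \<and> type34 K n \<and> {1..n+1} \<in> K \<and>
            char_partition K {1..n+1} = P)
       \<and> (\<forall>K1 K2 :: nat set set.
            strongly_connected K1 n \<and> type34 K1 n \<and> {1..n+1} \<in> K1 \<and>
            char_partition K1 {1..n+1} = P \<and>
            strongly_connected K2 n \<and> type34 K2 n \<and> {1..n+1} \<in> K2 \<and>
            char_partition K2 {1..n+1} = P \<longrightarrow>
            (\<exists>f. complex_iso f K1 K2 \<and> (\<forall>i\<in>{1..n+1}. f i = i)))
       \<and> (\<forall>(K :: 'a set set) D1 D2.
            strongly_connected K n \<and> type34 K n \<and>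
            D1 \<in> K \<and> card D1 = n + 1 \<and> D2 \<in> K \<and> card D2 = n + 1 \<longrightarrow>
            image_mset card (mset_set (char_partition K D1)) =
            image_mset card (mset_set (char_partition K D2)))"
proof (intro conjI allI impI)
  have n2: "2 \<le> n" using assms(1) .
  have n1: "1 \<le> n" using n2 by simp
  have part: "partition_on {1..n+1} P" using assms(2) .
  let ?D = "{1..n+1} :: nat set"
  have fD: "finite ?D" by simp
  have cD: "card ?D = Suc n" by simp
  show "\<exists>K :: nat set set. strongly_connected K n \<and> type34 K n \<and> ?D \<in> K \<and> char_partition K ?D = P"
  proof -
    define W where "W B = n + 1 + Min B" for B :: "nat set"
    have BD: "B \<subseteq> ?D" if BP: "B \<in> P" for B
      using Union_upper[OF BP] partition_onD1[OF part] by simp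
    have Bne: "B \<noteq> {}" if BP: "B \<in> P" for B
    proof
      assume "B = {}" then show False using partition_onD3[OF part] BP by simp
    qed
    have MinB: "Min B \<in> B" if BP: "B \<in> P" for B
      using Min_in[OF finite_subset[OF BD[OF BP] fD] Bne[OF BP]] .
    have WD: "W B \<notin> ?D" if BP: "B \<in> P" for B
    proof -
      have "Min B \<in> ?D" using subsetD[OF BD[OF BP] MinB[OF BP]] .
      then show ?thesis by (simp add: W_def)
    qed
    have inj: "inj_on W P"
    proof (rule inj_onI)
      fix B B' assume B: "B \<in> P" and B': "B' \<in> P" and eq: "W B = W B'"
      have "Min B = Min B'" using eq by (simp add: W_def)
      then have "Min B \<in> B \<inter> B'" using MinB[OF B] MinB[OF B'] by simp
      then show "B = B'" using partition_onD2[OF part] B B' unfolding disjoint_def by blast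
    qed
    define Q where "Q = (\<lambda>B. insert (W B) B) ` P"
    interpret b: blocks Q n unfolding Q_def by (rule blocks_ins(1)[OF part fD inj WD cD])
    have DF: "?D \<in> Fac Q" unfolding Q_def by (rule blocks_ins(3)[OF part fD inj WD cD])
    have FK: "Fac Q \<subseteq> Kmod Q" using b.Fac_Kmod by blast
    have "char_partition (Kmod Q) ?D = (\<lambda>C. C \<inter> ?D) ` Q"
      by (rule b.cp_Fac[OF b.closed FK n1 DF])
    also have "\<dots> = (\<lambda>B. insert (W B) B \<inter> ?D) ` P" unfolding Q_def by (simp add: image_image)
    also have "\<dots> = (\<lambda>B. B) ` P"
      by (rule image_cong) (use blocks_ins(5)[OF part fD inj WD cD] in simp_all)
    also have "\<dots> = P" by simp
    finally have "char_partition (Kmod Q) ?D = P" .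
    moreover have "?D \<in> Kmod Q" using b.Fac_Kmod[OF DF] .
    ultimately show ?thesis using b.sc b.type34[OF n2] by blast
  qed
next
  fix K1 K2 :: "nat set set"
  assume H: "strongly_connected K1 n \<and> type34 K1 n \<and> {1..n+1} \<in> K1 \<and> char_partition K1 {1..n+1} = P \<and>
            strongly_connected K2 n \<and> type34 K2 n \<and> {1..n+1} \<in> K2 \<and> char_partition K2 {1..n+1} = P"
  have n2: "2 \<le> n" using assms(1) .
  have part: "partition_on {1..n+1} P" using assms(2) .
  let ?D = "{1..n+1} :: nat set"
  have fD: "finite ?D" by simp
  have cD: "card ?D = Suc n" by simp
  have D1: "?D \<in> K1" "card ?D = Suc n" using H by simp_all
  obtain W1 where W1: "inj_on W1 (char_partition K1 ?D)" "\<forall>B\<in>char_partition K1 ?D. W1 B \<notin> ?D"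
      "K1 = Kmod ((\<lambda>B. insert (W1 B) B) ` char_partition K1 ?D)"
    using cx_structure[OF n2 _ _ D1] H by blast
  obtain W2 where W2: "inj_on W2 (char_partition K2 ?D)" "\<forall>B\<in>char_partition K2 ?D. W2 B \<notin> ?D"
      "K2 = Kmod ((\<lambda>B. insert (W2 B) B) ` char_partition K2 ?D)"
    using cx_structure[OF n2 _ _ _ cD, of K2] H by blast
  have P1: "char_partition K1 ?D = P" and P2: "char_partition K2 ?D = P" using H by simp_all
  have "\<exists>f. complex_iso f (Kmod ((\<lambda>B. insert (W1 B) B) ` P)) (Kmod ((\<lambda>B. insert (W2 B) B) ` P))
             \<and> (\<forall>i\<in>?D. f i = i)"
    by (rule iso_blocks[OF part fD _ _ _ _ cD]) (use W1 W2 P1 P2 in simp_all)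
  then show "\<exists>f. complex_iso f K1 K2 \<and> (\<forall>i\<in>{1..n+1}. f i = i)" using W1(3) W2(3) P1 P2 by simp
next
  fix K :: "'a set set" and D1 D2
  assume H: "strongly_connected K n \<and> type34 K n \<and> D1 \<in> K \<and> card D1 = n + 1 \<and> D2 \<in> K \<and> card D2 = n + 1"
  have n2: "2 \<le> n" using assms(1) .
  have n1: "1 \<le> n" using n2 by simp
  have D1: "D1 \<in> K" "card D1 = Suc n" using H by simp_all
  have fD1: "finite D1" using D1(2) card.infinite by fastforce
  obtain W where W: "partition_on D1 (char_partition K D1)" "inj_on W (char_partition K D1)"
      "\<forall>B\<in>char_partition K D1. W B \<notin> D1"
      "K = Kmod ((\<lambda>B. insert (W B) B) ` char_partition K D1)"
    using cx_structure[OF n2 _ _ D1] H by blast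
  define Q where "Q = (\<lambda>B. insert (W B) B) ` char_partition K D1"
  have WD: "\<And>B. B \<in> char_partition K D1 \<Longrightarrow> W B \<notin> D1" using W(3) by blast
  interpret b: blocks Q n unfolding Q_def by (rule blocks_ins(1)[OF W(1) fD1 W(2) WD D1(2)])
  have KQ: "K = Kmod Q" using W(4) by (simp add: Q_def)
  have F1: "D1 \<in> Fac Q" unfolding Q_def by (rule blocks_ins(3)[OF W(1) fD1 W(2) WD D1(2)])
  have F2: "D2 \<in> Fac Q" using b.Kmod_facet[of D2] H KQ by simp
  have cl: "closed_complex K n" using KQ b.closed by simp
  have FK: "Fac Q \<subseteq> K" using KQ b.Fac_Kmod by blast
  show "image_mset card (mset_set (char_partition K D1)) = image_mset card (mset_set (char_partition K D2))"
    using b.mset_Fac[OF cl FK n1 F1] b.mset_Fac[OF cl FK n1 F2] by simp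
qed

end
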